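(* Let $G$ be a finite abstract simplicial complex with connection matrix $L$. Then $\mathrm{str}(L^{-1})=\chi(G)$, where $\mathrm{str}(M)=\sum_{x\in G}\omega(x)M(x,x)$.
   Context: A finite abstract simplicial complex $G$ is a finite set of non-empty finite sets closed under taking non-empty subsets. $\omega(x)=(-1)^{|x|-1}$, $\chi(G)=\sum_{x\in G}\omega(x)$. The connection matrix $L$ is indexed by simplices with $L(x,y)=1$ if $x\cap y\neq\emptyset$ and $0$ otherwise; it is invertible. *)

theory Defs
  imports Complex_Main
begin

definition simplicial_complex :: "'a set set \<Rightarrow> bool" where
  "simplicial_complex G \<longleftrightarrow> finite G \<and> (\<forall>x\<in>G. finite x \<and> x \<noteq> {}) \<and>
     (\<forall>x\<in>G. \<forall>y. y \<subseteq> x \<and> y \<noteq> {} \<longrightarrow> y \<in> G)"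

definition omega :: "'a set \<Rightarrow> real" where
  "omega x = (-1) ^ (card x - 1)"

definition euler_char :: "'a set set \<Rightarrow> real" where
  "euler_char G = (\<Sum>x\<in>G. omega x)"

text \<open>Matrices indexed by simplices of G are functions G \<times> G \<rightarrow> real (entries
outside G are irrelevant / taken to be 0).\<close>
definition connection_matrix :: "'a set set \<Rightarrow> 'a set \<Rightarrow> 'a set \<Rightarrow> real" where
  "connection_matrix G x y = (if x \<in> G \<and> y \<in> G \<and> x \<inter> y \<noteq> {} then 1 else 0)"

definition is_inverse_on :: "'b set \<Rightarrow> ('b \<Rightarrow> 'b \<Rightarrow> real) \<Rightarrow> ('b \<Rightarrow> 'b \<Rightarrow> real) \<Rightarrow> bool" where
  "is_inverse_on G L M \<longleftrightarrow>
     (\<forall>x\<in>G. \<forall>z\<in>G. (\<Sum>y\<in>G. L x y * M y z) = (if x = z then 1 else 0)) \<and>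
     (\<forall>x\<in>G. \<forall>z\<in>G. (\<Sum>y\<in>G. M x y * L y z) = (if x = z then 1 else 0)) \<and>
     (\<forall>x z. x \<notin> G \<or> z \<notin> G \<longrightarrow> M x z = 0)"

definition inverse_on :: "'b set \<Rightarrow> ('b \<Rightarrow> 'b \<Rightarrow> real) \<Rightarrow> ('b \<Rightarrow> 'b \<Rightarrow> real)" where
  "inverse_on G L = (THE M. is_inverse_on G L M)"

definition supertrace :: "'a set set \<Rightarrow> ('a set \<Rightarrow> 'a set \<Rightarrow> real) \<Rightarrow> real" where
  "supertrace G M = (\<Sum>x\<in>G. omega x * M x x)"

end

theory Submission
  imports Defs
begin

lemma pow_sign_sum:
  assumes "finite B"
  shows "(\<Sum>y\<in>Pow B. (-1::real) ^ card y) = (if B = {} then 1 else 0)"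
  using assms
proof (induction B rule: finite_induct)
  case empty
  then show ?case by simp
next
  case (insert a B)
  have P: "Pow (insert a B) = Pow B \<union> insert a ` Pow B" by (rule Pow_insert)
  have disj: "Pow B \<inter> insert a ` Pow B = {}" using insert by auto
  have inj: "inj_on (insert a) (Pow B)"
  proof (rule inj_onI)
    fix x y assume "x \<in> Pow B" "y \<in> Pow B" "insert a x = insert a y"
    moreover have "a \<notin> x" "a \<notin> y" using calculation insert by auto
    ultimately show "x = y" by (metis insert_ident)
  qed
  have fin: "finite (Pow B)" using insert by simp
  have "(\<Sum>y\<in>insert a ` Pow B. (-1::real) ^ card y) = (\<Sum>y\<in>Pow B. (-1::real) ^ card (insert a y))"
    by (rule sum.reindex[OF inj, unfolded comp_def])
  also have "\<dots> = (\<Sum>y\<in>Pow B. - ((-1::real) ^ card y))"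
  proof (rule sum.cong)
    fix y assume "y \<in> Pow B"
    then have "finite y" "a \<notin> y" using insert finite_subset by auto
    then show "(-1::real) ^ card (insert a y) = - ((-1::real) ^ card y)" by simp
  qed simp
  finally have "(\<Sum>y\<in>Pow (insert a B). (-1::real) ^ card y) = 0"
    unfolding P using sum.union_disjoint[OF fin _ disj, of "\<lambda>y. (-1::real) ^ card y"] fin
    by (simp add: sum_negf)
  then show ?case by simp
qed

lemma interval_sign_sum:
  assumes "finite w" "v \<subseteq> w"
  shows "(\<Sum>x\<in>{x. v \<subseteq> x \<and> x \<subseteq> w}. (-1::real) ^ card x) = (if v = w then (-1) ^ card v else 0)"
proof -
  have inj: "inj_on (\<lambda>y. v \<union> y) (Pow (w - v))" unfolding inj_on_def by blast
  have img: "(\<lambda>y. v \<union> y) ` Pow (w - v) = {x. v \<subseteq> x \<and> x \<subseteq> w}"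
  proof
    show "{x. v \<subseteq> x \<and> x \<subseteq> w} \<subseteq> (\<lambda>y. v \<union> y) ` Pow (w - v)"
    proof
      fix x assume "x \<in> {x. v \<subseteq> x \<and> x \<subseteq> w}"
      then have "x = v \<union> (x - v)" "x - v \<in> Pow (w - v)" by auto
      then show "x \<in> (\<lambda>y. v \<union> y) ` Pow (w - v)" by blast
    qed
  qed (use assms in auto)
  have "(\<Sum>x\<in>{x. v \<subseteq> x \<and> x \<subseteq> w}. (-1::real) ^ card x) = (\<Sum>y\<in>Pow (w - v). (-1::real) ^ card (v \<union> y))"
    unfolding img[symmetric] by (rule sum.reindex[OF inj, unfolded comp_def])
  also have "\<dots> = (\<Sum>y\<in>Pow (w - v). (-1::real) ^ card v * (-1) ^ card y)"
  proof (rule sum.cong)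
    fix y assume "y \<in> Pow (w - v)"
    then have "finite y" "finite v" "v \<inter> y = {}" using assms finite_subset[of y w] finite_subset[of v w] by auto
    then show "(-1::real) ^ card (v \<union> y) = (-1) ^ card v * (-1) ^ card y"
      by (simp add: card_Un_disjoint power_add)
  qed simp
  also have "\<dots> = (-1) ^ card v * (if w - v = {} then 1 else 0)"
    by (simp add: sum_distrib_left[symmetric] pow_sign_sum assms)
  finally show ?thesis using assms by auto
qed

lemma omega_sign: "finite x \<Longrightarrow> x \<noteq> {} \<Longrightarrow> omega x = - ((-1) ^ card x)"
  unfolding omega_def by (cases "card x") auto

lemma omega_sq: "omega x * omega x = 1"
  unfolding omega_def by (simp add: power_add[symmetric])

lemma omega_sq2: "omega x * (omega x * a) = a"
  by (simp add: mult.assoc[symmetric] omega_sq)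

lemma nonempty_subsets_sum:
  assumes "finite z"
  shows "(\<Sum>x\<in>Pow z - {{}}. omega x) = (if z = {} then 0 else 1)"
proof -
  have fin: "finite (Pow z)" using assms by simp
  have "(\<Sum>x\<in>Pow z - {{}}. omega x) = (\<Sum>x\<in>Pow z - {{}}. - ((-1::real) ^ card x))"
    proof (rule sum.cong)
    fix x assume "x \<in> Pow z - {{}}"
    then have "finite x" "x \<noteq> {}" using assms finite_subset[of x z] by auto
    then show "omega x = - ((-1::real) ^ card x)" by (rule omega_sign)
  qed simp
  also have "\<dots> = - ((\<Sum>x\<in>Pow z. (-1::real) ^ card x) - 1)"
    using sum_diff1[OF fin, of "\<lambda>x. (-1::real) ^ card x" "{}"] by (simp add: sum_negf)
  finally show ?thesis by (simp add: pow_sign_sum assms)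
qed


definition mm :: "'b set \<Rightarrow> ('b \<Rightarrow> 'b \<Rightarrow> real) \<Rightarrow> ('b \<Rightarrow> 'b \<Rightarrow> real) \<Rightarrow> ('b \<Rightarrow> 'b \<Rightarrow> real)" where
  "mm G A B = (\<lambda>x z. if x \<in> G \<and> z \<in> G then (\<Sum>y\<in>G. A x y * B y z) else 0)"

definition idm :: "'b set \<Rightarrow> ('b \<Rightarrow> 'b \<Rightarrow> real)" where
  "idm G = (\<lambda>x z. if x \<in> G \<and> z \<in> G \<and> x = z then 1 else 0)"

definition Zm :: "'a set set \<Rightarrow> ('a set \<Rightarrow> 'a set \<Rightarrow> real)" where
  "Zm G = (\<lambda>x y. if x \<in> G \<and> y \<in> G \<and> x \<subseteq> y then 1 else 0)"

definition Dm :: "'a set set \<Rightarrow> ('a set \<Rightarrow> 'a set \<Rightarrow> real)" where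
  "Dm G = (\<lambda>x y. if x \<in> G \<and> y \<in> G \<and> x = y then omega x else 0)"

definition tr :: "('b \<Rightarrow> 'b \<Rightarrow> real) \<Rightarrow> ('b \<Rightarrow> 'b \<Rightarrow> real)" where
  "tr A = (\<lambda>x y. A y x)"

lemma mm_assoc:
  assumes "finite G"
  shows "mm G (mm G A B) C = mm G A (mm G B C)"
proof (rule ext, rule ext)
  fix x z
  show "mm G (mm G A B) C x z = mm G A (mm G B C) x z"
  proof (cases "x \<in> G \<and> z \<in> G")
    case True
    have "mm G (mm G A B) C x z = (\<Sum>y\<in>G. \<Sum>w\<in>G. A x w * B w y * C y z)"
      using True by (simp add: mm_def sum_distrib_right)
    also have "\<dots> = (\<Sum>w\<in>G. \<Sum>y\<in>G. A x w * B w y * C y z)" by (rule sum.swap)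
    also have "\<dots> = mm G A (mm G B C) x z"
      using True by (simp add: mm_def sum_distrib_left mult.assoc)
    finally show ?thesis .
  qed (auto simp: mm_def)
qed

lemma tr_mm: "tr (mm G A B) = mm G (tr B) (tr A)"
  by (auto simp: tr_def mm_def mult.commute intro!: ext sum.cong)

lemma tr_Dm: "tr (Dm G) = Dm G"
  by (auto simp: tr_def Dm_def intro!: ext)

lemma mm_Dm_right:
  assumes "finite G"
  shows "mm G A (Dm G) = (\<lambda>x z. if x \<in> G \<and> z \<in> G then A x z * omega z else 0)"
proof (rule ext, rule ext)
  fix x z
  show "mm G A (Dm G) x z = (if x \<in> G \<and> z \<in> G then A x z * omega z else 0)"
  proof (cases "x \<in> G \<and> z \<in> G")
    case True
    have "mm G A (Dm G) x z = (\<Sum>y\<in>G. if y = z then A x z * omega z else 0)"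
      using True by (auto simp: mm_def Dm_def intro!: sum.cong)
    also have "\<dots> = A x z * omega z" using True assms by simp
    finally show ?thesis using True by simp
  qed (auto simp: mm_def)
qed

lemma mm_Dm_left:
  assumes "finite G"
  shows "mm G (Dm G) A = (\<lambda>x z. if x \<in> G \<and> z \<in> G then omega x * A x z else 0)"
proof (rule ext, rule ext)
  fix x z
  show "mm G (Dm G) A x z = (if x \<in> G \<and> z \<in> G then omega x * A x z else 0)"
  proof (cases "x \<in> G \<and> z \<in> G")
    case True
    have "mm G (Dm G) A x z = (\<Sum>y\<in>G. if y = x then omega x * A x z else 0)"
      using True by (auto simp: mm_def Dm_def intro!: sum.cong)
    also have "\<dots> = omega x * A x z" using True assms by simp
    finally show ?thesis using True by simp
  qed (auto simp: mm_def)
qed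

lemma DD: assumes "finite G" shows "mm G (Dm G) (Dm G) = idm G"
  unfolding mm_Dm_right[OF assms] by (auto simp: Dm_def idm_def omega_sq intro!: ext)

lemma idm_left:
  assumes "finite G" "\<And>x z. \<not> (x \<in> G \<and> z \<in> G) \<Longrightarrow> A x z = 0"
  shows "mm G (idm G) A = A"
proof (rule ext, rule ext)
  fix x z
  show "mm G (idm G) A x z = A x z"
  proof (cases "x \<in> G \<and> z \<in> G")
    case True
    have "mm G (idm G) A x z = (\<Sum>y\<in>G. if y = x then A x z else 0)"
      using True by (auto simp: mm_def idm_def intro!: sum.cong)
    then show ?thesis using True assms by simp
  qed (use assms in \<open>auto simp: mm_def\<close>)
qed

lemma DDX_mm: assumes "finite G" shows "mm G (Dm G) (mm G (Dm G) (mm G A B)) = mm G A B"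
proof -
  have "mm G (Dm G) (mm G (Dm G) (mm G A B)) = mm G (idm G) (mm G A B)"
    using mm_assoc[OF assms, of "Dm G" "Dm G"] DD[OF assms] by simp
  also have "\<dots> = mm G A B" by (rule idm_left[OF assms]) (auto simp: mm_def)
  finally show ?thesis .
qed

lemma DDX_Z: assumes "finite G" shows "mm G (Dm G) (mm G (Dm G) (Zm G)) = Zm G"
proof -
  have "mm G (Dm G) (mm G (Dm G) (Zm G)) = mm G (idm G) (Zm G)"
    using mm_assoc[OF assms, of "Dm G" "Dm G"] DD[OF assms] by simp
  also have "\<dots> = Zm G" by (rule idm_left[OF assms]) (auto simp: Zm_def)
  finally show ?thesis .
qed

context
  fixes G :: "'a set set"
  assumes sc: "simplicial_complex G"
begin

lemma finG: "finite G" using sc unfolding simplicial_complex_def by blast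
lemma neG: "x \<in> G \<Longrightarrow> x \<noteq> {}" using sc unfolding simplicial_complex_def by blast
lemma finx: "x \<in> G \<Longrightarrow> finite x" using sc unfolding simplicial_complex_def by blast
lemma clG: "x \<in> G \<Longrightarrow> y \<subseteq> x \<Longrightarrow> y \<noteq> {} \<Longrightarrow> y \<in> G"
  using sc unfolding simplicial_complex_def by blast

lemma ZDZ: "mm G (mm G (Zm G) (Dm G)) (Zm G) = Dm G"
proof (rule ext, rule ext)
  fix v w
  show "mm G (mm G (Zm G) (Dm G)) (Zm G) v w = Dm G v w"
  proof (cases "v \<in> G \<and> w \<in> G")
    case True
    have "mm G (mm G (Zm G) (Dm G)) (Zm G) v w = (\<Sum>x\<in>G. if v \<subseteq> x \<and> x \<subseteq> w then omega x else 0)"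
      unfolding mm_Dm_right[OF finG] using True by (auto simp: mm_def Zm_def intro!: sum.cong)
    also have "\<dots> = (\<Sum>x\<in>{x\<in>G. v \<subseteq> x \<and> x \<subseteq> w}. omega x)"
      using finG by (simp add: sum.inter_filter)
    also have "\<dots> = Dm G v w"
    proof (cases "v \<subseteq> w")
      case False
      then have E: "{x\<in>G. v \<subseteq> x \<and> x \<subseteq> w} = {}" by auto
      have "Dm G v w = 0" using False by (auto simp: Dm_def)
      then show ?thesis unfolding E by simp
    next
      case vw: True
      have fw: "finite w" "v \<noteq> {}" using True finx neG by auto
      have S: "{x\<in>G. v \<subseteq> x \<and> x \<subseteq> w} = {x. v \<subseteq> x \<and> x \<subseteq> w}"
      proof (rule equalityI; rule subsetI)
        fix x assume "x \<in> {x. v \<subseteq> x \<and> x \<subseteq> w}"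
        then show "x \<in> {x\<in>G. v \<subseteq> x \<and> x \<subseteq> w}" using clG[of w x] True fw by auto
      qed simp
      have "(\<Sum>x\<in>{x. v \<subseteq> x \<and> x \<subseteq> w}. omega x) = (\<Sum>x\<in>{x. v \<subseteq> x \<and> x \<subseteq> w}. - ((-1::real) ^ card x))"
      proof (rule sum.cong)
        fix x assume "x \<in> {x. v \<subseteq> x \<and> x \<subseteq> w}"
        then have "finite x" "x \<noteq> {}" using fw finite_subset[of x w] by auto
        then show "omega x = - ((-1::real) ^ card x)" by (rule omega_sign)
      qed simp
      also have "\<dots> = (if v = w then - ((-1) ^ card v) else 0)"
        by (simp add: sum_negf interval_sign_sum fw vw)
      also have "\<dots> = Dm G v w"
        using True fw finite_subset[OF vw] by (auto simp: Dm_def omega_sign)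
      finally show ?thesis unfolding S .
    qed
    finally show ?thesis .
  qed (auto simp: mm_def Dm_def)
qed

lemma L_fact: "connection_matrix G = mm G (mm G (tr (Zm G)) (Dm G)) (Zm G)"
proof (rule ext, rule ext)
  fix x y
  show "connection_matrix G x y = mm G (mm G (tr (Zm G)) (Dm G)) (Zm G) x y"
  proof (cases "x \<in> G \<and> y \<in> G")
    case True
    have "mm G (mm G (tr (Zm G)) (Dm G)) (Zm G) x y = (\<Sum>v\<in>G. if v \<subseteq> x \<inter> y then omega v else 0)"
      unfolding mm_Dm_right[OF finG] using True by (auto simp: mm_def Zm_def tr_def intro!: sum.cong)
    also have "\<dots> = (\<Sum>v\<in>{v\<in>G. v \<subseteq> x \<inter> y}. omega v)"
      using finG by (simp add: sum.inter_filter)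
    also have "{v\<in>G. v \<subseteq> x \<inter> y} = Pow (x \<inter> y) - {{}}"
    proof (rule equalityI; rule subsetI)
      fix v assume "v \<in> Pow (x \<inter> y) - {{}}"
      then show "v \<in> {v\<in>G. v \<subseteq> x \<inter> y}" using clG[of x v] True by auto
    qed (use neG in auto)
    also have "(\<Sum>v\<in>Pow (x \<inter> y) - {{}}. omega v) = (if x \<inter> y = {} then 0 else 1)"
      using True finx by (intro nonempty_subsets_sum) auto
    finally show ?thesis using True by (auto simp: connection_matrix_def)
  qed (auto simp: mm_def connection_matrix_def)
qed


lemma tZDtZ: "mm G (mm G (tr (Zm G)) (Dm G)) (tr (Zm G)) = Dm G"
proof -
  have "tr (mm G (mm G (Zm G) (Dm G)) (Zm G)) = mm G (tr (Zm G)) (mm G (Dm G) (tr (Zm G)))"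
    by (simp add: tr_mm tr_Dm)
  then have "mm G (tr (Zm G)) (mm G (Dm G) (tr (Zm G))) = Dm G" by (simp add: ZDZ tr_Dm)
  then show ?thesis by (simp add: mm_assoc[OF finG])
qed

lemma R1: "mm G (Zm G) (mm G (Dm G) (mm G (Zm G) X)) = mm G (Dm G) X"
  by (simp add: mm_assoc[OF finG, symmetric] ZDZ)
lemma R2: "mm G (tr (Zm G)) (mm G (Dm G) (mm G (tr (Zm G)) X)) = mm G (Dm G) X"
  by (simp add: mm_assoc[OF finG, symmetric] tZDtZ)
lemma R3: "mm G (Zm G) (mm G (Dm G) (Zm G)) = Dm G"
  by (simp add: mm_assoc[OF finG, symmetric] ZDZ)

definition "gm = mm G (mm G (mm G (mm G (Dm G) (Zm G)) (Dm G)) (tr (Zm G))) (Dm G)"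

lemma Lg: "mm G (connection_matrix G) gm = idm G"
  unfolding gm_def L_fact
  by (simp only: mm_assoc[OF finG] R1 R2 R3 DDX_mm[OF finG] DDX_Z[OF finG] DD[OF finG])

lemma gL: "mm G gm (connection_matrix G) = idm G"
  unfolding gm_def L_fact
  by (simp only: mm_assoc[OF finG] R1 R2 R3 DDX_mm[OF finG] DDX_Z[OF finG] DD[OF finG])

lemma gm_inv: "is_inverse_on G (connection_matrix G) gm"
  unfolding is_inverse_on_def
proof (intro conjI ballI allI impI)
  fix x z assume "x \<in> G" "z \<in> G"
  then show "(\<Sum>y\<in>G. connection_matrix G x y * gm y z) = (if x = z then 1 else 0)"
    using fun_cong[OF fun_cong[OF Lg, of x], of z] by (simp add: mm_def idm_def)
  show "(\<Sum>y\<in>G. gm x y * connection_matrix G y z) = (if x = z then 1 else 0)"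
    using fun_cong[OF fun_cong[OF gL, of x], of z] \<open>x \<in> G\<close> \<open>z \<in> G\<close> by (simp add: mm_def idm_def)
next
  fix x z assume "x \<notin> G \<or> z \<notin> G"
  then show "gm x z = 0" unfolding gm_def mm_def by auto
qed

lemma gm_diag: "x \<in> G \<Longrightarrow> gm x x = (\<Sum>y\<in>G. if x \<subseteq> y then omega y else 0)"
  unfolding gm_def mm_Dm_right[OF finG] mm_Dm_left[OF finG]
  apply (auto simp: mm_def Zm_def tr_def intro!: sum.cong)
  apply (simp add: sum_distrib_right)
  apply (rule sum.cong, simp)
  apply (simp add: algebra_simps omega_sq omega_sq2)
  done

end

lemma delta_r: "finite G \<Longrightarrow> z \<in> G \<Longrightarrow> (\<Sum>y\<in>G. f y * (if y = z then 1 else 0)) = (f z :: real)"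
proof -
  assume "finite G" "z \<in> G"
  have "\<And>y. f y * (if y = z then 1 else 0) = (if y = z then f z else 0)" by simp
  then show ?thesis using \<open>finite G\<close> \<open>z \<in> G\<close> by simp
qed

lemma delta_l: "finite G \<Longrightarrow> x \<in> G \<Longrightarrow> (\<Sum>w\<in>G. (if x = w then 1 else 0) * f w) = (f x :: real)"
proof -
  assume "finite G" "x \<in> G"
  have "\<And>w. (if x = w then 1 else 0) * f w = (if x = w then f x else 0)" by simp
  then show ?thesis using \<open>finite G\<close> \<open>x \<in> G\<close> by simp
qed

lemma inverse_unique:
  assumes "finite G" "is_inverse_on G L M" "is_inverse_on G L M'"
  shows "M = M'"
proof (rule ext, rule ext)
  fix x z
  show "M x z = M' x z"
  proof (cases "x \<in> G \<and> z \<in> G")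
    case True
    have "M x z = (\<Sum>y\<in>G. M x y * (if y = z then 1 else 0))"
      using True assms(1) by (simp add: delta_r)
    also have "\<dots> = (\<Sum>y\<in>G. M x y * (\<Sum>w\<in>G. L y w * M' w z))"
      using assms(3) True unfolding is_inverse_on_def by (intro sum.cong) auto
    also have "\<dots> = (\<Sum>y\<in>G. \<Sum>w\<in>G. M x y * L y w * M' w z)"
      by (simp add: sum_distrib_left mult.assoc)
    also have "\<dots> = (\<Sum>w\<in>G. \<Sum>y\<in>G. M x y * L y w * M' w z)" by (rule sum.swap)
    also have "\<dots> = (\<Sum>w\<in>G. (\<Sum>y\<in>G. M x y * L y w) * M' w z)"
      by (simp add: sum_distrib_right)
    also have "\<dots> = (\<Sum>w\<in>G. (if x = w then 1 else 0) * M' w z)"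
      using assms(2) True unfolding is_inverse_on_def by (intro sum.cong) auto
    also have "\<dots> = M' x z" using True assms(1) by (simp add: delta_l)
    finally show ?thesis .
  next
    case False
    then show ?thesis using assms(2,3) unfolding is_inverse_on_def by auto
  qed
qed

theorem mainTheorem11:
  fixes G :: "'a set set"
  assumes "simplicial_complex G"
  shows "supertrace G (inverse_on G (connection_matrix G)) = euler_char G"
proof -
  note fG = finG[OF assms]
  have I: "inverse_on G (connection_matrix G) = gm G"
    unfolding inverse_on_def
    using gm_inv[OF assms] inverse_unique[OF fG] by blast
  have "supertrace G (gm G) = (\<Sum>x\<in>G. \<Sum>y\<in>G. if x \<subseteq> y then omega x * omega y else 0)"
    unfolding supertrace_def
    by (rule sum.cong) (auto simp: gm_diag[OF assms] sum_distrib_left if_distrib cong: if_cong)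
  also have "\<dots> = (\<Sum>y\<in>G. \<Sum>x\<in>G. if x \<subseteq> y then omega x * omega y else 0)" by (rule sum.swap)
  also have "\<dots> = (\<Sum>y\<in>G. omega y)"
  proof (rule sum.cong)
    fix y assume y: "y \<in> G"
    have "(\<Sum>x\<in>G. if x \<subseteq> y then omega x * omega y else 0) = (\<Sum>x\<in>G. if x \<subseteq> y then omega x else 0) * omega y"
      by (simp add: sum_distrib_right) (rule sum.cong, auto)
    also have "(\<Sum>x\<in>G. if x \<subseteq> y then omega x else 0) = (\<Sum>x\<in>{x\<in>G. x \<subseteq> y}. omega x)"
      using fG by (simp add: sum.inter_filter)
    also have "{x\<in>G. x \<subseteq> y} = Pow y - {{}}"
    proof (rule equalityI; rule subsetI)
      fix v assume "v \<in> Pow y - {{}}"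
      then show "v \<in> {x\<in>G. x \<subseteq> y}" using clG[OF assms y, of v] by auto
    qed (use neG[OF assms] in auto)
    also have "(\<Sum>x\<in>Pow y - {{}}. omega x) = 1"
      using nonempty_subsets_sum[OF finx[OF assms y]] neG[OF assms y] by simp
    finally show "(\<Sum>x\<in>G. if x \<subseteq> y then omega x * omega y else 0) = omega y" by simp
  qed simp
  finally show ?thesis unfolding I euler_char_def .
qed

end
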